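(* Let $N\ge1$, $1\le S\le N$, $L$ a band-width vector, $\dot W$ an $L$-admissible matrix, $W_\varepsilon=\mathrm{Id}+\varepsilon\dot W$, $k\in\mathbb Z$, and $\beta\in\mathbb R^S$ such that $e^{-2\pi ik\beta_1},\dots,e^{-2\pi ik\beta_S}$ are pairwise distinct. Put $P_{\varepsilon,\beta}=D_{k,\beta,L}W_\varepsilon$. Suppose that for every sufficiently small $\varepsilon>0$ we are given a unit-norm $f_\varepsilon\in\mathbb C^N$ and $\lambda_\varepsilon\in\mathbb C$ with $P_{\varepsilon,\beta}f_\varepsilon=\lambda_\varepsilon f_\varepsilon$ and $\lambda_\varepsilon\to e^{-2\pi ik\beta_s}$ as $\varepsilon\to0$ for some $s\in\{1,\dots,S\}$. Then every accumulation point of $\{f_\varepsilon\}$ as $\varepsilon\to0$ is an eigenvector of $\hat P_{k,\beta,L}$.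
   Context: A band-width vector is $L=(L_1,\dots,L_S)$ of positive integers with $\sum_sL_s=N$; $N_0=0$, $N_s=N_{s-1}+L_s$, $B_s=\{j:N_{s-1}<j\le N_s\}$. $D_{k,\beta,L}$ is the diagonal matrix with $j$-th entry $e^{-2\pi ik\beta_s}$ for $j\in B_s$. $\dot W$ is $L$-admissible if it is real symmetric and (1) $\dot W_{ij}\ge0$ for $i\ne j$, $\sum_j\dot W_{ij}=0$ for all $i$; (2) $\dot W$ has $N$ distinct eigenvalues; (3) each $\hat W_s=(\dot W_{jk})_{j,k\in B_s}$ has $L_s$ distinct eigenvalues. $\hat W_L$ is block diagonal with blocks $\hat W_1,\dots,\hat W_S$ and $\hat P_{k,\beta,L}=D_{k,\beta,L}\hat W_L$. *)

theory Defs
  imports Complex_Main "Jordan_Normal_Form.Char_Poly"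
begin

(* Conventions: indices are 0-based. A band-width vector is a list L of
   positive naturals; S = length L; block s (0 \<le> s < S) is
   {Nst L s ..< Nst L (Suc s)} where Nst L s = L_0 + ... + L_{s-1}. *)

definition bandwidth_vec :: "nat list \<Rightarrow> nat \<Rightarrow> bool" where
  "bandwidth_vec L N \<longleftrightarrow> (\<forall>s<length L. 0 < L ! s) \<and> sum_list L = N"

definition Nst :: "nat list \<Rightarrow> nat \<Rightarrow> nat" where
  "Nst L s = sum_list (take s L)"

definition blk :: "nat list \<Rightarrow> nat \<Rightarrow> nat" where
  "blk L j = (LEAST s. j < Nst L (Suc s))"

definition Wblock :: "nat list \<Rightarrow> 'a mat \<Rightarrow> nat \<Rightarrow> 'a mat" where
  "Wblock L W s = mat (L ! s) (L ! s) (\<lambda>(i,j). W $$ (Nst L s + i, Nst L s + j))"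

definition Wblockdiag :: "nat list \<Rightarrow> 'a::zero mat \<Rightarrow> 'a mat" where
  "Wblockdiag L W = mat (dim_row W) (dim_col W)
     (\<lambda>(i,j). if blk L i = blk L j then W $$ (i,j) else 0)"

definition admissible :: "nat list \<Rightarrow> nat \<Rightarrow> real mat \<Rightarrow> bool" where
  "admissible L N W \<longleftrightarrow>
     W \<in> carrier_mat N N \<and> transpose_mat W = W \<and>
     (\<forall>i<N. \<forall>j<N. i \<noteq> j \<longrightarrow> 0 \<le> W $$ (i,j)) \<and>
     (\<forall>i<N. (\<Sum>j<N. W $$ (i,j)) = 0) \<and>
     card {\<mu>. eigenvalue W \<mu>} = N \<and>
     (\<forall>s<length L. card {\<mu>. eigenvalue (Wblock L W s) \<mu>} = L ! s)"

definition Dmat :: "nat list \<Rightarrow> int \<Rightarrow> (nat \<Rightarrow> real) \<Rightarrow> complex mat" where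
  "Dmat L k \<beta> = mat (sum_list L) (sum_list L)
     (\<lambda>(i,j). if i = j then cis (- 2 * pi * of_int k * \<beta> (blk L i)) else 0)"

definition cmat :: "real mat \<Rightarrow> complex mat" where
  "cmat W = map_mat complex_of_real W"

definition vnorm :: "complex vec \<Rightarrow> real" where
  "vnorm v = sqrt (\<Sum>i<dim_vec v. (cmod (v $ i))^2)"

definition accum_point_at0 :: "nat \<Rightarrow> (real \<Rightarrow> complex vec) \<Rightarrow> complex vec \<Rightarrow> bool" where
  "accum_point_at0 N f g \<longleftrightarrow> g \<in> carrier_vec N \<and>
     (\<exists>e::nat \<Rightarrow> real. (\<forall>n. 0 < e n) \<and> e \<longlonglongrightarrow> 0 \<and>
        (\<forall>i<N. (\<lambda>n. f (e n) $ i) \<longlonglongrightarrow> g $ i))"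

end

theory Submission
  imports Defs
begin

lemma mv_comp:
  assumes "A \<in> carrier_mat N N" "x \<in> carrier_vec N" "i < N"
  shows "(A *\<^sub>v x) $ i = (\<Sum>j<N. A $$ (i,j) * x $ j)"
  using assms by (auto simp: scalar_prod_def row_def lessThan_atLeast0)

lemma D_carrier: "Dmat L k \<beta> \<in> carrier_mat (sum_list L) (sum_list L)"
  by (simp add: Dmat_def)

lemma D_comp:
  assumes "x \<in> carrier_vec (sum_list L)" "i < sum_list L"
  shows "(Dmat L k \<beta> *\<^sub>v x) $ i = cis (- 2 * pi * of_int k * \<beta> (blk L i)) * x $ i"
proof -
  have "(Dmat L k \<beta> *\<^sub>v x) $ i = (\<Sum>j<sum_list L. Dmat L k \<beta> $$ (i,j) * x $ j)"
    by (rule mv_comp[OF D_carrier assms])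
  also have "\<dots> = (\<Sum>j<sum_list L. if j = i then cis (- 2 * pi * of_int k * \<beta> (blk L i)) * x $ i else 0)"
    using assms by (intro sum.cong) (auto simp: Dmat_def)
  also have "\<dots> = cis (- 2 * pi * of_int k * \<beta> (blk L i)) * x $ i" using assms by simp
  finally show ?thesis .
qed

lemma blk_lt:
  assumes "i < sum_list L"
  shows "blk L i < length L"
proof -
  have "L \<noteq> []" using assms by auto
  then have "i < Nst L (Suc (length L - 1))" using assms by (simp add: Nst_def)
  then have "blk L i \<le> length L - 1" unfolding blk_def by (rule Least_le)
  moreover have "length L > 0" using \<open>L \<noteq> []\<close> by simp
  ultimately show ?thesis by linarith
qed

lemma pert_comp:
  fixes W :: "complex mat"
  assumes W: "W \<in> carrier_mat N N" and x: "x \<in> carrier_vec N" and i: "i < N"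
  shows "((1\<^sub>m N + c \<cdot>\<^sub>m W) *\<^sub>v x) $ i = x $ i + c * (\<Sum>j<N. W $$ (i,j) * x $ j)"
proof -
  have "((1\<^sub>m N + c \<cdot>\<^sub>m W) *\<^sub>v x) $ i = (\<Sum>j<N. (1\<^sub>m N + c \<cdot>\<^sub>m W) $$ (i,j) * x $ j)"
    by (rule mv_comp) (use W x i in auto)
  also have "\<dots> = (\<Sum>j<N. (if j = i then x $ i else 0) + c * (W $$ (i,j) * x $ j))"
    using W i by (intro sum.cong) (auto simp: algebra_simps)
  also have "\<dots> = x $ i + c * (\<Sum>j<N. W $$ (i,j) * x $ j)"
    using i by (simp add: sum.distrib sum_distrib_left)
  finally show ?thesis .
qed

lemma lim_eq_ev:
  assumes "X \<longlonglongrightarrow> a" "Y \<longlonglongrightarrow> b" "eventually (\<lambda>n. X n = Y n) sequentially"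
  shows "a = (b :: 'a :: t2_space)"
proof -
  have "Y \<longlonglongrightarrow> a" by (rule Lim_transform_eventually[OF assms(1) assms(3)])
  then show ?thesis using assms(2) by (rule LIMSEQ_unique)
qed

theorem lemma3p6:
  fixes N :: nat and L :: "nat list" and Wd :: "real mat" and k :: int
    and \<beta> :: "nat \<Rightarrow> real" and f :: "real \<Rightarrow> complex vec" and lam :: "real \<Rightarrow> complex"
    and s :: nat and g :: "complex vec"
  assumes "1 \<le> N" and "1 \<le> length L" and "length L \<le> N"
    and "bandwidth_vec L N"
    and "admissible L N Wd"
    and "\<forall>s<length L. \<forall>t<length L. s \<noteq> t \<longrightarrow>
           cis (- 2 * pi * of_int k * \<beta> s) \<noteq> cis (- 2 * pi * of_int k * \<beta> t)"
    and "\<exists>\<epsilon>0>0. \<forall>\<epsilon>. 0 < \<epsilon> \<and> \<epsilon> < \<epsilon>0 \<longrightarrow>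
           f \<epsilon> \<in> carrier_vec N \<and> vnorm (f \<epsilon>) = 1 \<and>
           (Dmat L k \<beta> * (1\<^sub>m N + complex_of_real \<epsilon> \<cdot>\<^sub>m cmat Wd)) *\<^sub>v f \<epsilon> = lam \<epsilon> \<cdot>\<^sub>v f \<epsilon>"
    and "s < length L"
    and "(lam \<longlongrightarrow> cis (- 2 * pi * of_int k * \<beta> s)) (at_right 0)"
    and "accum_point_at0 N f g"
  shows "\<exists>\<mu>. eigenvector (Dmat L k \<beta> * Wblockdiag L (cmat Wd)) g \<mu>"
proof -
  define c where "c t = cis (- 2 * pi * of_int k * \<beta> t)" for t
  define W where "W = cmat Wd"
  have NL: "sum_list L = N" using assms(4) by (simp add: bandwidth_vec_def)
  have Wc: "W \<in> carrier_mat N N" using assms(5) by (auto simp: admissible_def W_def cmat_def)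
  have Dc: "Dmat L k \<beta> \<in> carrier_mat N N" using D_carrier NL by metis
  obtain \<epsilon>0 where e0: "\<epsilon>0 > 0" and fe: "\<And>\<epsilon>. 0 < \<epsilon> \<Longrightarrow> \<epsilon> < \<epsilon>0 \<Longrightarrow>
           f \<epsilon> \<in> carrier_vec N \<and> vnorm (f \<epsilon>) = 1 \<and>
           (Dmat L k \<beta> * (1\<^sub>m N + complex_of_real \<epsilon> \<cdot>\<^sub>m W)) *\<^sub>v f \<epsilon> = lam \<epsilon> \<cdot>\<^sub>v f \<epsilon>"
    using assms(7) unfolding W_def by blast
  obtain e :: "nat \<Rightarrow> real" where epos: "\<And>n. 0 < e n" and e0l: "e \<longlonglongrightarrow> 0"
    and Fg: "\<And>i. i < N \<Longrightarrow> (\<lambda>n. f (e n) $ i) \<longlonglongrightarrow> g $ i" and gc: "g \<in> carrier_vec N"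
    using assms(10) unfolding accum_point_at0_def by blast
  define F where "F n = f (e n)" for n
  define Wv where "Wv n i = (\<Sum>j<N. W $$ (i,j) * F n $ j)" for n i
  define Wg where "Wg i = (\<Sum>j<N. W $$ (i,j) * g $ j)" for i
  have Fg': "\<And>i. i < N \<Longrightarrow> (\<lambda>n. F n $ i) \<longlonglongrightarrow> g $ i" using Fg by (simp add: F_def)
  have WvWg: "(\<lambda>n. Wv n i) \<longlonglongrightarrow> Wg i" for i
    unfolding Wv_def Wg_def by (intro tendsto_sum tendsto_mult_left Fg') auto
  have evsmall: "eventually (\<lambda>n. e n < \<epsilon>0) sequentially"
    using order_tendstoD(2)[OF e0l e0] .
  have evF: "eventually (\<lambda>n. F n \<in> carrier_vec N \<and> vnorm (F n) = 1 \<and>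
     (\<forall>i<N. c (blk L i) * (F n $ i + of_real (e n) * Wv n i) = lam (e n) * F n $ i)) sequentially"
    using evsmall
  proof eventually_elim
    case (elim n)
    from fe[OF epos elim] have F: "F n \<in> carrier_vec N" "vnorm (F n) = 1"
      and eq: "(Dmat L k \<beta> * (1\<^sub>m N + complex_of_real (e n) \<cdot>\<^sub>m W)) *\<^sub>v F n = lam (e n) \<cdot>\<^sub>v F n"
      by (auto simp: F_def)
    have "\<forall>i<N. c (blk L i) * (F n $ i + of_real (e n) * Wv n i) = lam (e n) * F n $ i"
    proof (intro allI impI)
      fix i assume i: "i < N"
      have Pc: "1\<^sub>m N + complex_of_real (e n) \<cdot>\<^sub>m W \<in> carrier_mat N N" using Wc by auto
      have "lam (e n) * F n $ i = ((Dmat L k \<beta> * (1\<^sub>m N + complex_of_real (e n) \<cdot>\<^sub>m W)) *\<^sub>v F n) $ i"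
        using eq i F by simp
      also have "\<dots> = (Dmat L k \<beta> *\<^sub>v ((1\<^sub>m N + complex_of_real (e n) \<cdot>\<^sub>m W) *\<^sub>v F n)) $ i"
        using Dc Pc F by (simp add: assoc_mult_mat_vec)
      also have "\<dots> = c (blk L i) * (((1\<^sub>m N + complex_of_real (e n) \<cdot>\<^sub>m W) *\<^sub>v F n) $ i)"
        unfolding c_def using D_comp[of "(1\<^sub>m N + complex_of_real (e n) \<cdot>\<^sub>m W) *\<^sub>v F n" L i k \<beta>] NL i Pc F(1)
        by auto
      also have "\<dots> = c (blk L i) * (F n $ i + of_real (e n) * Wv n i)"
        using pert_comp[OF Wc F(1) i] unfolding Wv_def by simp
      finally show "c (blk L i) * (F n $ i + of_real (e n) * Wv n i) = lam (e n) * F n $ i" by simp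
    qed
    then show ?case using F by blast
  qed
  have lamlim: "(\<lambda>n. lam (e n)) \<longlonglongrightarrow> c s"
  proof -
    have "filterlim e (at_right 0) sequentially"
      by (rule tendsto_imp_filterlim_at_right[OF e0l]) (use epos in auto)
    then show ?thesis using filterlim_compose[OF assms(9)[folded c_def]] by blast
  qed
  have cnz: "c t \<noteq> 0" for t by (simp add: c_def)
  have g0: "g $ i = 0" if i: "i < N" and bi: "blk L i \<noteq> s" for i
  proof -
    have bl: "blk L i < length L" using blk_lt NL i by metis
    have cd: "c s \<noteq> c (blk L i)" using assms(6) assms(8) bl bi unfolding c_def by metis
    have "(\<lambda>n. of_real (e n) * c (blk L i) * Wv n i) \<longlonglongrightarrow> of_real 0 * c (blk L i) * Wg i"
      by (intro tendsto_intros e0l WvWg)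
    moreover have "(\<lambda>n. F n $ i * (lam (e n) - c (blk L i))) \<longlonglongrightarrow> g $ i * (c s - c (blk L i))"
      by (intro tendsto_intros Fg' i lamlim)
    moreover have "eventually (\<lambda>n. of_real (e n) * c (blk L i) * Wv n i = F n $ i * (lam (e n) - c (blk L i))) sequentially"
      using evF
    proof eventually_elim
      case (elim n)
      then have h: "c (blk L i) * (F n $ i + of_real (e n) * Wv n i) = lam (e n) * F n $ i" using i by blast
      have "of_real (e n) * c (blk L i) * Wv n i = c (blk L i) * (F n $ i + of_real (e n) * Wv n i) - c (blk L i) * F n $ i"
        by (simp add: algebra_simps)
      also have "\<dots> = F n $ i * (lam (e n) - c (blk L i))" unfolding h by (simp add: algebra_simps)
      finally show ?case .
    qed
    ultimately have "of_real 0 * c (blk L i) * Wg i = g $ i * (c s - c (blk L i))"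
      by (rule lim_eq_ev)
    then have "g $ i * (c s - c (blk L i)) = 0" by simp
    then show ?thesis using cd by simp
  qed
  have sum1: "(\<Sum>i<N. (cmod (g $ i))^2) = 1"
  proof -
    have "(\<lambda>n. \<Sum>i<N. (cmod (F n $ i))^2) \<longlonglongrightarrow> (\<Sum>i<N. (cmod (g $ i))^2)"
      by (intro tendsto_intros Fg') auto
    moreover have "eventually (\<lambda>n. (\<Sum>i<N. (cmod (F n $ i))^2) = 1) sequentially"
      using evF
    proof eventually_elim
      case (elim n)
      then have "sqrt (\<Sum>i<N. (cmod (F n $ i))^2) = 1" by (auto simp: vnorm_def)
      then show ?case by simp
    qed
    ultimately have "(\<Sum>i<N. (cmod (g $ i))^2) = 1"
      using lim_eq_ev[OF _ tendsto_const] by blast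
    then show ?thesis .
  qed
  obtain i0 where i0: "i0 < N" "g $ i0 \<noteq> 0"
  proof (rule ccontr)
    assume "\<not> thesis"
    then have "\<forall>i<N. g $ i = 0" using that by blast
    then have "(\<Sum>i<N. (cmod (g $ i))^2) = 0" by simp
    then show False using sum1 by simp
  qed
  have bi0: "blk L i0 = s" using g0 i0 by blast
  define \<mu> where "\<mu> = Wg i0 / g $ i0"
  have Wgmu: "Wg i = \<mu> * g $ i" if i: "i < N" and bi: "blk L i = s" for i
  proof -
    have "(\<lambda>n. Wv n i * F n $ i0) \<longlonglongrightarrow> Wg i * g $ i0"
      by (intro tendsto_intros Fg' i0 WvWg)
    moreover have "(\<lambda>n. Wv n i0 * F n $ i) \<longlonglongrightarrow> Wg i0 * g $ i"
      by (intro tendsto_intros Fg' i WvWg)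
    moreover have "eventually (\<lambda>n. Wv n i * F n $ i0 = Wv n i0 * F n $ i) sequentially"
      using evF
    proof eventually_elim
      case (elim n)
      have a: "of_real (e n) * c s * Wv n i = (lam (e n) - c s) * F n $ i"
      proof -
        have h: "c s * (F n $ i + of_real (e n) * Wv n i) = lam (e n) * F n $ i" using elim i bi by blast
        have "of_real (e n) * c s * Wv n i = c s * (F n $ i + of_real (e n) * Wv n i) - c s * F n $ i"
          by (simp add: algebra_simps)
        also have "\<dots> = (lam (e n) - c s) * F n $ i" unfolding h by (simp add: algebra_simps)
        finally show ?thesis .
      qed
      have b: "of_real (e n) * c s * Wv n i0 = (lam (e n) - c s) * F n $ i0"
      proof -
        have h: "c s * (F n $ i0 + of_real (e n) * Wv n i0) = lam (e n) * F n $ i0" using elim i0 bi0 by blast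
        have "of_real (e n) * c s * Wv n i0 = c s * (F n $ i0 + of_real (e n) * Wv n i0) - c s * F n $ i0"
          by (simp add: algebra_simps)
        also have "\<dots> = (lam (e n) - c s) * F n $ i0" unfolding h by (simp add: algebra_simps)
        finally show ?thesis .
      qed
      have "(of_real (e n) * c s) * (Wv n i * F n $ i0) = (of_real (e n) * c s) * (Wv n i0 * F n $ i)"
      proof -
        have "(of_real (e n) * c s) * (Wv n i * F n $ i0) = (of_real (e n) * c s * Wv n i) * F n $ i0"
          by (simp add: mult.assoc)
        also have "\<dots> = (lam (e n) - c s) * F n $ i * F n $ i0" unfolding a ..
        also have "\<dots> = (lam (e n) - c s) * F n $ i0 * F n $ i" by (simp add: mult_ac)
        also have "\<dots> = (of_real (e n) * c s * Wv n i0) * F n $ i" unfolding b ..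
        also have "\<dots> = (of_real (e n) * c s) * (Wv n i0 * F n $ i)" by (simp add: mult.assoc)
        finally show ?thesis .
      qed
      moreover have "(of_real (e n) * c s :: complex) \<noteq> 0" using epos[of n] cnz[of s] by simp
      ultimately show ?case by simp
    qed
    ultimately have "Wg i * g $ i0 = Wg i0 * g $ i"
      by (rule lim_eq_ev)
    then show ?thesis unfolding \<mu>_def using i0 by (simp add: field_simps)
  qed
  define B where "B = Wblockdiag L W"
  have Bc: "B \<in> carrier_mat N N" using Wc by (auto simp: B_def Wblockdiag_def)
  have Bg: "(B *\<^sub>v g) $ i = (if blk L i = s then \<mu> * g $ i else 0)" if i: "i < N" for i
  proof -
    have "(B *\<^sub>v g) $ i = (\<Sum>j<N. B $$ (i,j) * g $ j)" by (rule mv_comp[OF Bc gc i])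
    also have "\<dots> = (\<Sum>j<N. if blk L i = s then W $$ (i,j) * g $ j else 0)"
      using Wc i g0 by (intro sum.cong) (auto simp: B_def Wblockdiag_def)
    also have "\<dots> = (if blk L i = s then \<mu> * g $ i else 0)"
      using Wgmu[OF i] unfolding Wg_def by simp
    finally show ?thesis .
  qed
  have "eigenvector (Dmat L k \<beta> * B) g (c s * \<mu>)"
    unfolding eigenvector_def
  proof (intro conjI)
    show "g \<in> carrier_vec (dim_row (Dmat L k \<beta> * B))" using gc Dc by simp
    show "g \<noteq> 0\<^sub>v (dim_row (Dmat L k \<beta> * B))"
    proof
      assume "g = 0\<^sub>v (dim_row (Dmat L k \<beta> * B))"
      then have "g $ i0 = 0" using i0 Dc by simp
      then show False using i0 by simp
    qed
    show "Dmat L k \<beta> * B *\<^sub>v g = (c s * \<mu>) \<cdot>\<^sub>v g"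
    proof (rule eq_vecI)
      show "dim_vec (Dmat L k \<beta> * B *\<^sub>v g) = dim_vec ((c s * \<mu>) \<cdot>\<^sub>v g)" using Dc gc by simp
      fix i assume "i < dim_vec ((c s * \<mu>) \<cdot>\<^sub>v g)"
      then have i: "i < N" using gc by simp
      have "(Dmat L k \<beta> * B *\<^sub>v g) $ i = (Dmat L k \<beta> *\<^sub>v (B *\<^sub>v g)) $ i"
        using Dc Bc gc by (simp add: assoc_mult_mat_vec)
      also have "\<dots> = c (blk L i) * (B *\<^sub>v g) $ i"
        unfolding c_def using D_comp[of "B *\<^sub>v g" L i k \<beta>] NL i Bc gc by auto
      also have "\<dots> = ((c s * \<mu>) \<cdot>\<^sub>v g) $ i"
        using Bg[OF i] g0[OF i] gc i by auto
      finally show "(Dmat L k \<beta> * B *\<^sub>v g) $ i = ((c s * \<mu>) \<cdot>\<^sub>v g) $ i" .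
    qed
  qed
  then show ?thesis unfolding B_def W_def by blast
qed

end
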